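(* (i) The Hamming distance $d$ is an integer-valued metric on $\mathscr P$. (ii) For all $\lambda,\mu\in\mathscr P$, $d(\lambda,\mu)=\frac12|S_\lambda\,\Delta\,S_\mu|$. (iii) If $|\lambda|=|\mu|$, then $d(\lambda,\mu)\ne1$. (iv) For every integer $k\ge0$, if $d(\lambda,\mu)=2k$, then $|S_\lambda\setminus S_\mu|=2k=|S_\mu\setminus S_\lambda|$.
   Context: $\mathscr P$ is the set of all integer partitions, $|\lambda|$ the size, $\lambda'$ the transpose. Modified Frobenius coordinates: if $d$ is the number of $i\ge1$ with $\lambda_i\ge i$, put $c_i=\lambda_i-i+\frac12$ and $c_i^*=-(\lambda'_i-i)-\frac12$ for $i=1,\dots,d$, and $C_\lambda=\{c_1,\dots,c_d,c_1^*,\dots,c_d^*\}\subset\mathbb Z+\frac12$. The Hamming distance is $d(\lambda,\mu)=\frac12|C_\lambda\,\Delta\,C_\mu|$, where $X\,\Delta\,Y=(X\cup Y)\setminus(X\cap Y)$. Also $S_\lambda=\{\lambda_j-j+\frac12: j\ge1\}$ (with $\lambda_j=0$ for $j$ larger than the length). *)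

theory Defs
  imports Complex_Main
begin

definition is_partition :: "nat list \<Rightarrow> bool" where
  "is_partition xs \<longleftrightarrow> sorted_wrt (\<ge>) xs \<and> 0 \<notin> set xs"

text \<open>The i-th part (1-based), zero beyond the length.\<close>
definition part :: "nat list \<Rightarrow> nat \<Rightarrow> nat" where
  "part xs i = (if 1 \<le> i \<and> i \<le> length xs then xs ! (i - 1) else 0)"

definition psize :: "nat list \<Rightarrow> nat" where
  "psize xs = sum_list xs"

definition tpart :: "nat list \<Rightarrow> nat \<Rightarrow> nat" where
  "tpart xs i = card {j. 1 \<le> j \<and> i \<le> part xs j}"

definition durfee :: "nat list \<Rightarrow> nat" where
  "durfee xs = card {i. 1 \<le> i \<and> i \<le> part xs i}"

text \<open>Modified Frobenius coordinates, as a subset of Z + 1/2 inside the reals.\<close>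
definition frob :: "nat list \<Rightarrow> real set" where
  "frob xs = {real (part xs i) - real i + 1/2 | i. 1 \<le> i \<and> i \<le> durfee xs}
           \<union> {- (real (tpart xs i) - real i) - 1/2 | i. 1 \<le> i \<and> i \<le> durfee xs}"

definition symdiff :: "'a set \<Rightarrow> 'a set \<Rightarrow> 'a set" where
  "symdiff X Y = (X \<union> Y) - (X \<inter> Y)"

definition hamming :: "nat list \<Rightarrow> nat list \<Rightarrow> real" where
  "hamming xs ys = real (card (symdiff (frob xs) (frob ys))) / 2"

definition Sset :: "nat list \<Rightarrow> real set" where
  "Sset xs = {real (part xs j) - real j + 1/2 | j. 1 \<le> j}"

end

theory Submission imports Defs begin

lemma part_zero: "length xs < j \<Longrightarrow> part xs j = 0"
  by (simp add: part_def)

lemma part_pos: "is_partition xs \<Longrightarrow> 1 \<le> j \<Longrightarrow> j \<le> length xs \<Longrightarrow> 0 < part xs j"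
proof -
  assume a: "is_partition xs" "1 \<le> j" "j \<le> length xs"
  then have "xs ! (j-1) \<in> set xs" by (intro nth_mem) simp
  then have "xs ! (j-1) \<noteq> 0" using a(1) unfolding is_partition_def by metis
  then show ?thesis using a unfolding part_def by simp
qed

lemma part_mono: assumes "is_partition xs" "1 \<le> i" "i \<le> j" shows "part xs j \<le> part xs i"
proof (cases "j \<le> length xs")
  case True
  show ?thesis
  proof (cases "i = j")
    case False
    then have "i - 1 < j - 1" using assms by simp
    moreover have "j - 1 < length xs" using True assms by simp
    ultimately have "xs ! (j-1) \<le> xs ! (i-1)" using assms(1) unfolding is_partition_def
      by (simp add: sorted_wrt_iff_nth_less)
    then show ?thesis using True assms unfolding part_def by simp
  qed simp
next
  case False then show ?thesis by (simp add: part_def)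
qed

lemma dc: assumes "finite E" "\<forall>j\<in>E. 1 \<le> j" "\<forall>j\<in>E. \<forall>j'. 1 \<le> j' \<and> j' \<le> j \<longrightarrow> j' \<in> E"
  shows "E = {1..card E}"
proof (cases "E = {}")
  case True then show ?thesis by simp
next
  case False
  define m where "m = Max E"
  have "m \<in> E" using False assms(1) m_def by simp
  have "E = {1..m}"
  proof (intro set_eqI iffI)
    fix x assume "x \<in> E"
    then show "x \<in> {1..m}" using assms(1,2) m_def Max_ge by simp
  next
    fix x assume "x \<in> {1..m}"
    then show "x \<in> E" using assms(3) \<open>m \<in> E\<close> by simp
  qed
  then show ?thesis by simp
qed

lemma tpart_set: assumes "is_partition xs" "1 \<le> i"
  shows "{j. 1 \<le> j \<and> i \<le> part xs j} = {1..tpart xs i}"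
proof -
  let ?E = "{j. 1 \<le> j \<and> i \<le> part xs j}"
  have "?E \<subseteq> {1..length xs}"
  proof
    fix j assume "j \<in> ?E"
    then show "j \<in> {1..length xs}" using part_zero[of xs j] assms by (cases "j \<le> length xs") auto
  qed
  then have "finite ?E" using finite_subset by blast
  moreover have "\<forall>j\<in>?E. \<forall>j'. 1 \<le> j' \<and> j' \<le> j \<longrightarrow> j' \<in> ?E"
    using part_mono[OF assms(1)] by (auto intro: order_trans)
  ultimately show ?thesis using dc[of ?E] unfolding tpart_def by auto
qed

lemma tpart_iff: "is_partition xs \<Longrightarrow> 1 \<le> i \<Longrightarrow> 1 \<le> j \<Longrightarrow> (i \<le> part xs j \<longleftrightarrow> j \<le> tpart xs i)"
  using tpart_set[of xs i] by (auto simp: set_eq_iff)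

lemma durfee_set: assumes "is_partition xs"
  shows "{i. 1 \<le> i \<and> i \<le> part xs i} = {1..durfee xs}"
proof -
  let ?E = "{i. 1 \<le> i \<and> i \<le> part xs i}"
  have "?E \<subseteq> {1..length xs}"
  proof
    fix j assume "j \<in> ?E"
    then show "j \<in> {1..length xs}" using part_zero[of xs j] assms by (cases "j \<le> length xs") auto
  qed
  then have "finite ?E" using finite_subset by blast
  moreover have "\<forall>j\<in>?E. \<forall>j'. 1 \<le> j' \<and> j' \<le> j \<longrightarrow> j' \<in> ?E"
    using part_mono[OF assms(1)] by (auto intro: order_trans)
  ultimately show ?thesis using dc[of ?E] unfolding durfee_def by auto
qed

lemma durfee_iff: "is_partition xs \<Longrightarrow> 1 \<le> i \<Longrightarrow> (i \<le> part xs i \<longleftrightarrow> i \<le> durfee xs)"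
  using durfee_set[of xs] by (auto simp: set_eq_iff)

definition G :: "nat list \<Rightarrow> nat \<Rightarrow> int" where "G xs j = int (part xs j) - int j"
definition Si :: "nat list \<Rightarrow> int set" where "Si xs = G xs ` {1..}"
definition Fi :: "nat list \<Rightarrow> int set" where
  "Fi xs = G xs ` {1..durfee xs} \<union> (\<lambda>i. int i - int (tpart xs i) - 1) ` {1..durfee xs}"
definition hh :: "int \<Rightarrow> real" where "hh z = real_of_int z + 1/2"

lemma inj_hh: "inj hh" by (auto simp: inj_def hh_def)

lemma Sset_eq: "Sset xs = hh ` Si xs"
  unfolding Sset_def Si_def hh_def G_def by (auto simp: image_iff)

lemma frob_eq: "frob xs = hh ` Fi xs"
proof -
  have 1: "frob xs = (\<lambda>i. real (part xs i) - real i + 1/2) ` {1..durfee xs}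
    \<union> (\<lambda>i. - (real (tpart xs i) - real i) - 1/2) ` {1..durfee xs}"
    unfolding frob_def by auto
  show ?thesis unfolding 1 Fi_def image_Un image_image hh_def G_def
    by (intro arg_cong2[where f="(\<union>)"] image_cong) auto
qed

lemma G_mono: "is_partition xs \<Longrightarrow> 1 \<le> i \<Longrightarrow> i < j \<Longrightarrow> G xs j < G xs i"
  unfolding G_def using part_mono[of xs i j] by simp

lemma G_mono_le: "is_partition xs \<Longrightarrow> 1 \<le> i \<Longrightarrow> i \<le> j \<Longrightarrow> G xs j \<le> G xs i"
  using G_mono[of xs i j] by (cases "i = j") auto

lemma G_inj: "is_partition xs \<Longrightarrow> inj_on (G xs) {1..}"
  unfolding inj_on_def by (metis G_mono atLeast_iff linorder_neqE_nat order_less_irrefl)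


lemma G_zero: "length xs < j \<Longrightarrow> G xs j = - int j"
  by (simp add: G_def part_zero)

lemma Fi_char: assumes P: "is_partition xs"
  shows "Fi xs = (Si xs \<inter> {z. 0 \<le> z}) \<union> ({z. z < 0} - Si xs)"
proof -
  let ?d = "durfee xs"
  have pos: "G xs ` {1..?d} = Si xs \<inter> {z. 0 \<le> z}"
  proof -
    have "\<And>j. 1 \<le> j \<Longrightarrow> (0 \<le> G xs j \<longleftrightarrow> j \<le> ?d)"
      using durfee_iff[OF P] by (auto simp: G_def)
    then show ?thesis unfolding Si_def by auto
  qed
  have neg1: "int i - int (tpart xs i) - 1 \<in> {z. z < 0} - Si xs" if i: "1 \<le> i" "i \<le> ?d" for i
  proof -
    define J where "J = tpart xs i"
    have "i \<le> part xs i" using durfee_iff[OF P i(1)] i by simp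
    then have "i \<le> J" using tpart_iff[OF P i(1) i(1)] J_def by simp
    have pJ: "i \<le> part xs J" using tpart_iff[OF P i(1), of J] J_def \<open>i \<le> J\<close> i by simp
    have pJ1: "\<not> i \<le> part xs (J+1)" using tpart_iff[OF P i(1), of "J+1"] J_def by simp
    have ne: "G xs j \<noteq> int i - int J - 1" if j: "1 \<le> j" for j
    proof (cases "j \<le> J")
      case True
      then have "part xs J \<le> part xs j" using part_mono[OF P j] by simp
      then show ?thesis using pJ True by (simp add: G_def)
    next
      case False
      then have "part xs j \<le> part xs (J+1)" using part_mono[OF P, of "J+1" j] by simp
      then show ?thesis using pJ1 False by (simp add: G_def)
    qed
    have "int i - int J - 1 \<notin> Si xs"
    proof
      assume "int i - int J - 1 \<in> Si xs"
      then obtain j where j: "1 \<le> j" "G xs j = int i - int J - 1" unfolding Si_def by auto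
      show False using ne[OF j(1)] j(2) by simp
    qed
    moreover have "int i - int J - 1 < 0" using \<open>i \<le> J\<close> by simp
    ultimately show ?thesis unfolding J_def[symmetric] by blast
  qed
  have neg2: "z \<in> (\<lambda>i. int i - int (tpart xs i) - 1) ` {1..?d}" if z: "z < 0" "z \<notin> Si xs" for z
  proof -
    have nh: "\<And>j. 1 \<le> j \<Longrightarrow> G xs j \<noteq> z" using z unfolding Si_def by auto
    let ?L = "{j. 1 \<le> j \<and> z < G xs j}"
    have "?L \<subseteq> {1..max (length xs) (nat (-z))}"
    proof
      fix j assume "j \<in> ?L"
      then show "j \<in> {1..max (length xs) (nat (-z))}"
        using G_zero[of xs j] by (cases "length xs < j") auto
    qed
    then have fin: "finite ?L" using finite_subset by blast
    have "\<forall>j\<in>?L. \<forall>j'. 1 \<le> j' \<and> j' \<le> j \<longrightarrow> j' \<in> ?L"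
      using G_mono_le[OF P] by (auto intro: order_less_le_trans)
    then have L: "?L = {1..card ?L}" using dc[OF fin] by auto
    define J where "J = card ?L"
    have "1 \<in> ?L"
    proof -
      have "z \<le> G xs 1 \<or> True" by simp
      have "G xs 1 \<ge> -1" by (simp add: G_def)
      moreover have "G xs 1 \<noteq> z" using nh by simp
      ultimately show ?thesis using z by auto
    qed
    have LJ: "?L = {1..J}" using L unfolding J_def .
    have "1 \<in> {1..J}" using \<open>1 \<in> ?L\<close> LJ by blast
    then have "1 \<le> J" by simp
    then have "J \<in> {1..J}" by simp
    then have "J \<in> ?L" using LJ by blast
    then have GJ: "z < G xs J" by simp
    have "J + 1 \<notin> {1..J}" by simp
    then have "J + 1 \<notin> ?L" using LJ by blast
    then have GJ1: "G xs (J+1) < z" using nh[of "J+1"] by auto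
    define i where "i = nat (z + int J + 1)"
    have ii: "int i = z + int J + 1" using GJ1 unfolding i_def G_def by simp
    have i1: "1 \<le> i" using GJ1 ii unfolding G_def by simp
    have iJ: "i \<le> J" using ii z by simp
    have pJ: "i \<le> part xs J" using GJ ii unfolding G_def by simp
    have pJ1: "part xs (J+1) < i" using GJ1 ii unfolding G_def by simp
    have "part xs J \<le> part xs i" using part_mono[OF P i1 iJ] .
    then have "i \<le> ?d" using durfee_iff[OF P i1] pJ by simp
    have "tpart xs i = J"
    proof -
      have "{j. 1 \<le> j \<and> i \<le> part xs j} = {1..J}"
      proof (intro set_eqI iffI)
        fix j assume "j \<in> {j. 1 \<le> j \<and> i \<le> part xs j}"
        then show "j \<in> {1..J}"
          using part_mono[OF P, of "J+1" j] pJ1 by (cases "j \<le> J") auto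
      next
        fix j assume "j \<in> {1..J}"
        then show "j \<in> {j. 1 \<le> j \<and> i \<le> part xs j}"
          using part_mono[OF P, of j J] pJ by auto
      qed
      then have "{1..tpart xs i} = {1..J}" using tpart_set[OF P i1] by metis
      then have "card {1..tpart xs i} = card {1..J}" by (rule arg_cong)
      then show ?thesis by simp
    qed
    then have "z = int i - int (tpart xs i) - 1" using ii by simp
    then show ?thesis using i1 \<open>i \<le> ?d\<close> by auto
  qed
  have neg: "(\<lambda>i. int i - int (tpart xs i) - 1) ` {1..?d} = {z. z < 0} - Si xs"
  proof (intro equalityI subsetI)
    fix z assume "z \<in> (\<lambda>i. int i - int (tpart xs i) - 1) ` {1..?d}"
    then obtain i where "i \<in> {1..?d}" "z = int i - int (tpart xs i) - 1" by blast
    then show "z \<in> {z. z < 0} - Si xs" using neg1[of i] by simp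
  next
    fix z assume "z \<in> {z. z < 0} - Si xs"
    then show "z \<in> (\<lambda>i. int i - int (tpart xs i) - 1) ` {1..?d}" using neg2[of z] by simp
  qed
  show ?thesis unfolding Fi_def pos neg ..
qed


lemma Si_split: assumes P: "is_partition xs" and N: "length xs \<le> N"
  shows "Si xs = G xs ` {1..N} \<union> {z. z < - int N}"
    and "G xs ` {1..N} \<subseteq> {z. - int N \<le> z}"
proof -
  show "Si xs = G xs ` {1..N} \<union> {z. z < - int N}"
  proof (intro set_eqI iffI)
    fix z assume "z \<in> Si xs"
    then obtain j where j: "1 \<le> j" "z = G xs j" unfolding Si_def by auto
    then show "z \<in> G xs ` {1..N} \<union> {z. z < - int N}"
      using G_zero[of xs j] N by (cases "j \<le> N") auto
  next
    fix z assume z: "z \<in> G xs ` {1..N} \<union> {z. z < - int N}"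
    show "z \<in> Si xs"
    proof (cases "z < - int N")
      case True
      then have "G xs (nat (-z)) = z" "1 \<le> nat (-z)" using G_zero[of xs "nat (-z)"] N by auto
      then show ?thesis unfolding Si_def by (metis atLeast_iff imageI)
    next
      case False then show ?thesis using z unfolding Si_def by auto
    qed
  qed
  show "G xs ` {1..N} \<subseteq> {z. - int N \<le> z}" by (auto simp: G_def)
qed

lemma card_GN: "is_partition xs \<Longrightarrow> card (G xs ` {1..N}) = N"
  using G_inj[of xs] by (metis atLeastAtMost_iff atLeast_iff card_atLeastAtMost card_image diff_Suc_1 inj_on_subset subsetI)

lemma sum_part: assumes "length xs \<le> N" shows "(\<Sum>j=1..N. part xs j) = sum_list xs"
proof -
  have "(\<Sum>j=1..N. part xs j) = (\<Sum>i<N. part xs (Suc i))"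
    by (metis One_nat_def sum.atLeast1_atMost_eq)
  also have "\<dots> = (\<Sum>i<N. if i < length xs then xs ! i else 0)"
    by (intro sum.cong) (auto simp: part_def)
  also have "\<dots> = (\<Sum>i<length xs. xs ! i)"
    using assms by (simp add: sum.If_cases lessThan_def Collect_conj_eq[symmetric] min_def)
       (metis (mono_tags, lifting) Collect_cong order_less_le_trans)
  also have "\<dots> = sum_list xs" by (simp add: sum_list_sum_nth atLeast0LessThan)
  finally show ?thesis .
qed

lemma sum_GN: assumes "is_partition xs" "length xs \<le> N"
  shows "(\<Sum>z\<in>G xs ` {1..N}. z) = int (psize xs) - (\<Sum>j=1..N. int j)"
proof -
  have "(\<Sum>z\<in>G xs ` {1..N}. z) = (\<Sum>j=1..N. G xs j)"
    using G_inj[OF assms(1)] by (subst sum.reindex) (auto intro: inj_on_subset)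
  also have "\<dots> = (\<Sum>j=1..N. int (part xs j)) - (\<Sum>j=1..N. int j)"
    by (simp add: G_def sum_subtractf)
  also have "(\<Sum>j=1..N. int (part xs j)) = int (psize xs)"
    using sum_part[OF assms(2)] by (simp add: psize_def flip: of_nat_sum)
  finally show ?thesis .
qed


lemma Si_diff: assumes "is_partition l" "is_partition m" "length l \<le> N" "length m \<le> N"
  shows "Si l - Si m = G l ` {1..N} - G m ` {1..N}"
  using Si_split[OF assms(1,3)] Si_split[OF assms(2,4)] by force

lemma card_diff_sym: assumes "is_partition l" "is_partition m"
  shows "finite (Si l - Si m) \<and> card (Si l - Si m) = card (Si m - Si l)"
proof -
  define N where "N = max (length l) (length m)"
  have d1: "Si l - Si m = G l ` {1..N} - G m ` {1..N}" using Si_diff assms N_def by simp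
  have d2: "Si m - Si l = G m ` {1..N} - G l ` {1..N}" using Si_diff assms N_def by simp
  have "card (G l ` {1..N} - G m ` {1..N}) = N - card (G l ` {1..N} \<inter> G m ` {1..N})"
    using card_GN[OF assms(1)] by (simp add: card_Diff_subset_Int)
  moreover have "card (G m ` {1..N} - G l ` {1..N}) = N - card (G m ` {1..N} \<inter> G l ` {1..N})"
    using card_GN[OF assms(2)] by (simp add: card_Diff_subset_Int)
  ultimately show ?thesis using d1 d2 by (simp add: Int_commute)
qed

lemma symdiff_img: "inj f \<Longrightarrow> symdiff (f ` X) (f ` Y) = f ` symdiff X Y"
  unfolding symdiff_def by (simp add: image_Un image_Int image_set_diff)

lemma symdiff_frob: assumes "is_partition l" "is_partition m"
  shows "symdiff (frob l) (frob m) = hh ` symdiff (Si l) (Si m)"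
proof -
  have "symdiff (Fi l) (Fi m) = symdiff (Si l) (Si m)"
    unfolding Fi_char[OF assms(1)] Fi_char[OF assms(2)] symdiff_def by auto
  then show ?thesis unfolding frob_eq symdiff_img[OF inj_hh] by simp
qed

lemma card_symdiff: "finite (X - Y) \<Longrightarrow> finite (Y - X) \<Longrightarrow> card (symdiff X Y) = card (X - Y) + card (Y - X)"
proof -
  assume "finite (X - Y)" "finite (Y - X)"
  moreover have "symdiff X Y = (X - Y) \<union> (Y - X)" unfolding symdiff_def by auto
  ultimately show ?thesis by (simp add: card_Un_disjoint Diff_Int_distrib2 inf_commute) 
qed

lemma hamming_eq: assumes "is_partition l" "is_partition m"
  shows "hamming l m = real (card (Si l - Si m))"
    and "symdiff (frob l) (frob m) = symdiff (Sset l) (Sset m)"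
    and "finite (symdiff (Sset l) (Sset m))"
proof -
  have c: "finite (Si l - Si m)" "finite (Si m - Si l)" "card (Si l - Si m) = card (Si m - Si l)"
    using card_diff_sym[OF assms] card_diff_sym[OF assms(2,1)] by auto
  show "symdiff (frob l) (frob m) = symdiff (Sset l) (Sset m)"
    unfolding symdiff_frob[OF assms] Sset_eq symdiff_img[OF inj_hh] ..
  have se: "symdiff (Si l) (Si m) = (Si l - Si m) \<union> (Si m - Si l)" unfolding symdiff_def by blast
  have "finite (symdiff (Si l) (Si m))" unfolding se using c(1,2) by (rule finite_UnI)
  then show "finite (symdiff (Sset l) (Sset m))" unfolding Sset_eq symdiff_img[OF inj_hh] by simp
  have "card (symdiff (frob l) (frob m)) = card (symdiff (Si l) (Si m))"
    unfolding symdiff_frob[OF assms] using card_image inj_hh by (metis inj_on_subset subset_UNIV)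
  also have "\<dots> = 2 * card (Si l - Si m)" using card_symdiff[OF c(1,2)] c(3) by simp
  finally show "hamming l m = real (card (Si l - Si m))" unfolding hamming_def by simp
qed

lemma rank: assumes P: "is_partition xs" "1 \<le> j"
  shows "card {y \<in> Si xs. G xs j < y} = j - 1"
proof -
  have "{y \<in> Si xs. G xs j < y} = G xs ` {1..<j}"
  proof (intro set_eqI iffI)
    fix y assume "y \<in> {y \<in> Si xs. G xs j < y}"
    then obtain j' where "1 \<le> j'" "y = G xs j'" "G xs j < G xs j'" unfolding Si_def by auto
    then show "y \<in> G xs ` {1..<j}" using G_mono_le[OF P(1), of j j'] assms by force
  next
    fix y assume "y \<in> G xs ` {1..<j}"
    then show "y \<in> {y \<in> Si xs. G xs j < y}" using G_mono[OF P(1)] unfolding Si_def by auto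
  qed
  moreover have "inj_on (G xs) {1..<j}" using G_inj[OF P(1)] by (rule inj_on_subset) auto
  ultimately show ?thesis by (simp add: card_image)
qed

lemma Si_inj: assumes "is_partition l" "is_partition m" "Si l = Si m" shows "l = m"
proof -
  have pe: "part l j = part m j" if j: "1 \<le> j" for j
  proof -
    have "G l j \<in> Si m" using assms(3) j unfolding Si_def by auto
    then obtain j' where j': "1 \<le> j'" "G l j = G m j'" unfolding Si_def by auto
    have "j - 1 = j' - 1" using rank[OF assms(1) j] rank[OF assms(2) j'(1)] j' assms(3) by simp
    then have "j = j'" using j j' by simp
    then show ?thesis using j' by (simp add: G_def)
  qed
  have len: "length l = length m"
  proof (rule ccontr)
    assume "length l \<noteq> length m"
    then consider "length l < length m" | "length m < length l" by linarith
    then show False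
    proof cases
      case 1 then show False using pe[of "length m"] part_pos[OF assms(2), of "length m"] part_zero[of l "length m"] by simp
    next
      case 2 then show False using pe[of "length l"] part_pos[OF assms(1), of "length l"] part_zero[of m "length l"] by simp
    qed
  qed
  show ?thesis
  proof (rule nth_equalityI[OF len])
    fix i assume "i < length l"
    then show "l ! i = m ! i" using pe[of "Suc i"] len by (simp add: part_def)
  qed
qed


lemma finite_frob: "finite (frob xs)"
  unfolding frob_eq Fi_def by simp

lemma Sset_diff_card: "card (Sset l - Sset m) = card (Si l - Si m)"
proof -
  have "Sset l - Sset m = hh ` (Si l - Si m)" unfolding Sset_eq using inj_hh by (simp add: image_set_diff)
  then show ?thesis using inj_hh by (simp add: card_image inj_on_subset)
qed

lemma part_iii: assumes P: "is_partition l" "is_partition m" and s: "psize l = psize m"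
  shows "hamming l m \<noteq> 1"
proof
  assume h1: "hamming l m = 1"
  define N where "N = max (length l) (length m)"
  define A where "A = G l ` {1..N}"
  define B where "B = G m ` {1..N}"
  have c1: "card (Si l - Si m) = 1" using h1 hamming_eq(1)[OF P] by simp
  have "card (A - B) = 1" using c1 Si_diff[OF P, of N] N_def A_def B_def by simp
  then obtain a where a: "A - B = {a}" by (rule card_1_singletonE)
  have "card (B - A) = 1" using c1 card_diff_sym[OF P] Si_diff[OF P(2,1), of N] N_def A_def B_def by simp
  then obtain b where b: "B - A = {b}" by (rule card_1_singletonE)
  have fA: "finite A" "finite B" unfolding A_def B_def by simp_all
  have eA: "A = (A \<inter> B) \<union> {a}" using a by blast
  have eB: "B = (A \<inter> B) \<union> {b}" using b by blast
  have "a \<notin> A \<inter> B" "b \<notin> A \<inter> B" using a b by blast+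
  then have "sum id A = sum id (A \<inter> B) + a" "sum id B = sum id (A \<inter> B) + b"
    using fA eA eB by (metis Un_insert_right finite_Int id_apply sum.insert sup_bot.right_neutral add.commute)+
  moreover have "sum id A = sum id B"
    using sum_GN[OF P(1), of N] sum_GN[OF P(2), of N] s N_def A_def B_def by simp
  ultimately have "a = b" by simp
  then show False using a b by blast
qed

theorem lemma6:
  shows
  "(\<forall>l m n. is_partition l \<and> is_partition m \<and> is_partition n \<longrightarrow>
       hamming l m \<in> \<int> \<and> hamming l m \<ge> 0 \<and>
       (hamming l m = 0 \<longleftrightarrow> l = m) \<and>
       hamming l m = hamming m l \<and>
       hamming l n \<le> hamming l m + hamming m n)
   \<and> (\<forall>l m. is_partition l \<and> is_partition m \<longrightarrow>
       finite (symdiff (Sset l) (Sset m)) \<and>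
       hamming l m = real (card (symdiff (Sset l) (Sset m))) / 2)
   \<and> (\<forall>l m. is_partition l \<and> is_partition m \<and> psize l = psize m \<longrightarrow> hamming l m \<noteq> 1)
   \<and> (\<forall>l m (k::nat). is_partition l \<and> is_partition m \<and> hamming l m = 2 * real k \<longrightarrow>
       card (Sset l - Sset m) = 2 * k \<and> card (Sset m - Sset l) = 2 * k)"
proof (intro conjI allI impI)
  fix l m n assume "is_partition l \<and> is_partition m \<and> is_partition n"
  then have P: "is_partition l" "is_partition m" "is_partition n" by auto
  have h: "hamming l m = real (card (Si l - Si m))" using hamming_eq(1)[OF P(1,2)] .
  show "hamming l m \<in> \<int>" unfolding h by simp
  show "hamming l m \<ge> 0" unfolding h by simp
  show "hamming l m = 0 \<longleftrightarrow> l = m"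
  proof
    assume "hamming l m = 0"
    then have c0: "card (Si l - Si m) = 0" using h by simp
    have cd: "finite (Si l - Si m)" "finite (Si m - Si l)" "card (Si m - Si l) = card (Si l - Si m)"
      using card_diff_sym[OF P(1,2)] card_diff_sym[OF P(2,1)] by auto
    have "Si l - Si m = {}" using c0 cd(1) by simp
    moreover have "Si m - Si l = {}" using c0 cd(2,3) by simp
    ultimately have "Si l = Si m" by blast
    then show "l = m" using Si_inj[OF P(1,2)] by simp
  next
    assume "l = m" then show "hamming l m = 0" using h by simp
  qed
  show "hamming l m = hamming m l" unfolding hamming_def symdiff_def by (simp add: Un_commute Int_commute)
  have sub: "symdiff (frob l) (frob n) \<subseteq> symdiff (frob l) (frob m) \<union> symdiff (frob m) (frob n)"
    unfolding symdiff_def by blast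
  have "card (symdiff (frob l) (frob n)) \<le> card (symdiff (frob l) (frob m) \<union> symdiff (frob m) (frob n))"
    by (rule card_mono[OF _ sub]) (simp add: symdiff_def finite_frob)
  also have "\<dots> \<le> card (symdiff (frob l) (frob m)) + card (symdiff (frob m) (frob n))"
    by (rule card_Un_le)
  finally show "hamming l n \<le> hamming l m + hamming m n" unfolding hamming_def by simp
next
  fix l m assume "is_partition l \<and> is_partition m"
  then have P: "is_partition l" "is_partition m" by auto
  show "finite (symdiff (Sset l) (Sset m))" using hamming_eq(3)[OF P] .
  show "hamming l m = real (card (symdiff (Sset l) (Sset m))) / 2"
    unfolding hamming_def hamming_eq(2)[OF P] ..
next
  fix l m assume "is_partition l \<and> is_partition m \<and> psize l = psize m"
  then show "hamming l m \<noteq> 1" using part_iii by blast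
next
  fix l m and k :: nat assume a: "is_partition l \<and> is_partition m \<and> hamming l m = 2 * real k"
  then have P: "is_partition l" "is_partition m" by auto
  have "card (Si l - Si m) = 2 * k" using a hamming_eq(1)[OF P]
    by (metis of_nat_eq_iff of_nat_mult of_nat_numeral)
  then show "card (Sset l - Sset m) = 2 * k" "card (Sset m - Sset l) = 2 * k"
    using Sset_diff_card card_diff_sym[OF P] by simp_all
qed

end
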